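(* Let $1<p\le2$ and $\varepsilon\in(0,3)$. For all sufficiently large $n$ (depending on $p,\varepsilon$) there exists an approximately convex set $A\subseteq\ell_p^n$ such that $$\mathcal{H}(A,\operatorname{Co}(A))\ge\log_2 n-\varepsilon\qquad\text{and}\qquad\operatorname{diam}(A)\le\frac{25}{\varepsilon}\,n^{(p-1)/p}(\log_2 n)^2 .$$
   Context: $\ell_p^n$ is $\mathbb{R}^n$ with the norm $(\sum|a_i|^p)^{1/p}$. A set $A$ is approximately convex if $d(tx+(1-t)y,A)\le1$ for all $x,y\in A$, $t\in[0,1]$, where $d(x,A)=\inf_{a\in A}\|x-a\|$. $\mathcal{H}$ is the Hausdorff distance, $\operatorname{Co}$ the convex hull, $\operatorname{diam}(A)=\sup\{\|x-y\|:x,y\in A\}$. *)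

theory Defs
  imports "HOL-Analysis.Analysis"
begin

text \<open>Points of \<open>\<ell>_p^n\<close> are represented as functions \<open>nat \<Rightarrow> real\<close>
  vanishing outside \<open>{..<n}\<close>.\<close>

definition lp_space :: "nat \<Rightarrow> (nat \<Rightarrow> real) set" where
  "lp_space n = {x. \<forall>i\<ge>n. x i = 0}"

definition lp_norm :: "real \<Rightarrow> nat \<Rightarrow> (nat \<Rightarrow> real) \<Rightarrow> real" where
  "lp_norm p n x = (\<Sum>i<n. \<bar>x i\<bar> powr p) powr (1 / p)"

definition lp_dist :: "real \<Rightarrow> nat \<Rightarrow> (nat \<Rightarrow> real) \<Rightarrow> (nat \<Rightarrow> real) \<Rightarrow> real" where
  "lp_dist p n x y = lp_norm p n (\<lambda>i. x i - y i)"

definition lp_setdist :: "real \<Rightarrow> nat \<Rightarrow> (nat \<Rightarrow> real) \<Rightarrow> (nat \<Rightarrow> real) set \<Rightarrow> real" where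
  "lp_setdist p n x A = Inf {lp_dist p n x a | a. a \<in> A}"

definition approx_convex :: "real \<Rightarrow> nat \<Rightarrow> (nat \<Rightarrow> real) set \<Rightarrow> bool" where
  "approx_convex p n A \<longleftrightarrow>
     (\<forall>x\<in>A. \<forall>y\<in>A. \<forall>t\<in>{0..1::real}.
        lp_setdist p n (\<lambda>i. t * x i + (1 - t) * y i) A \<le> 1)"

definition conv_hull :: "(nat \<Rightarrow> real) set \<Rightarrow> (nat \<Rightarrow> real) set" where
  "conv_hull A = {z. \<exists>(k::nat) (c::nat \<Rightarrow> real) v.
      (\<forall>j<k. 0 \<le> c j \<and> v j \<in> A) \<and> (\<Sum>j<k. c j) = 1 \<and>
      z = (\<lambda>i. \<Sum>j<k. c j * v j i)}"

definition lp_hausdorff :: "real \<Rightarrow> nat \<Rightarrow> (nat \<Rightarrow> real) set \<Rightarrow> (nat \<Rightarrow> real) set \<Rightarrow> ereal" where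
  "lp_hausdorff p n A B =
     max (SUP a\<in>A. ereal (lp_setdist p n a B)) (SUP b\<in>B. ereal (lp_setdist p n b A))"

definition lp_diam :: "real \<Rightarrow> nat \<Rightarrow> (nat \<Rightarrow> real) set \<Rightarrow> ereal" where
  "lp_diam p n A = (SUP x\<in>A. SUP y\<in>A. ereal (lp_dist p n x y))"

end

theory Submission
  imports Defs
begin

lemma g_bound:
  fixes p y :: real
  assumes p: "1 < p" "p \<le> 2" and y: "0 \<le> y"
  shows "y * ln y - y + 1 \<le> 4 / (p - 1) * \<bar>y - 1\<bar> powr p"
proof (cases "y \<le> 2")
  case True
  have a: "y * ln y \<le> y * (y - 1)"
  proof (cases "y = 0")
    case False
    then show ?thesis using y ln_le_minus_one[of y] by (simp add: mult_left_mono)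
  qed simp
  have b: "\<bar>y - 1\<bar> \<le> 1" using True y by auto
  have c: "\<bar>y - 1\<bar> powr 2 \<le> \<bar>y - 1\<bar> powr p"
    using b p by (intro powr_mono') auto
  have "(y - 1)^2 = \<bar>y - 1\<bar> powr 2"
    by (simp add: powr_numeral)
  also have "\<dots> \<le> \<bar>y - 1\<bar> powr p" by (rule c)
  also have "\<dots> \<le> 4 / (p - 1) * \<bar>y - 1\<bar> powr p"
  proof -
    have "1 \<le> 4 / (p - 1)" using p by (simp add: field_simps)
    then show ?thesis using mult_right_mono[of 1 "4 / (p - 1)" "\<bar>y - 1\<bar> powr p"] by simp
  qed
  finally show ?thesis using a by (simp add: power2_eq_square algebra_simps)
next
  case False
  then have y2: "y > 2" by simp
  have "ln y \<le> y powr (p - 1) / (p - 1)" using ln_powr_bound[of y "p-1"] y2 p by simp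
  then have "y * ln y \<le> y * (y powr (p - 1) / (p - 1))" using y2 mult_left_mono[of "ln y" "y powr (p - 1) / (p - 1)" y] by simp
  also have "\<dots> = y powr p / (p - 1)"
    using y2 powr_mult_base[of y "p - 1"] by simp
  also have "\<dots> \<le> (2 * (y - 1)) powr p / (p - 1)"
    using y2 p by (intro divide_right_mono powr_mono2) auto
  also have "\<dots> = 2 powr p * \<bar>y - 1\<bar> powr p / (p - 1)"
    using y2 powr_mult[of 2 "y - 1" p] by simp
  also have "\<dots> \<le> 4 * \<bar>y - 1\<bar> powr p / (p - 1)"
  proof -
    have "2 powr p \<le> 2 powr 2" using p by (intro powr_mono) auto
    then have "2 powr p \<le> 4" by simp
    then show ?thesis using p by (intro divide_right_mono mult_right_mono) auto
  qed
  finally show ?thesis using y2 by simp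
qed

definition eta :: "real \<Rightarrow> real" where "eta u = - u * ln u"

lemma xlnx_lower:
  fixes x z :: real assumes "0 \<le> x" "0 < z"
  shows "x * ln z + x - z \<le> x * ln x"
proof (cases "x = 0")
  case False
  then have x: "x > 0" using assms by simp
  have "ln (z / x) \<le> z / x - 1" using ln_le_minus_one[of "z/x"] x assms by simp
  then have "x * ln (z / x) \<le> x * (z / x - 1)" using x by (simp add: mult_left_mono)
  then show ?thesis using x assms by (simp add: ln_div algebra_simps)
qed (use assms in simp)

lemma eta_concave:
  fixes a b t :: real
  assumes "0 \<le> a" "0 \<le> b" "0 \<le> t" "t \<le> 1"
  shows "t * eta a + (1 - t) * eta b \<le> eta (t * a + (1 - t) * b)"
proof (cases "t * a + (1 - t) * b = 0")
  case True
  then have "t * a = 0" "(1 - t) * b = 0" using assms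
    by (smt (verit) mult_nonneg_nonneg)+
  then show ?thesis by (auto simp: eta_def)
next
  case False
  define z where "z = t * a + (1 - t) * b"
  have z: "z > 0" using False assms unfolding z_def
    by (smt (verit) mult_nonneg_nonneg)
  have 1: "t * (a * ln z + a - z) \<le> t * (a * ln a)"
    using xlnx_lower[OF assms(1) z] assms by (intro mult_left_mono) auto
  have 2: "(1 - t) * (b * ln z + b - z) \<le> (1 - t) * (b * ln b)"
    using xlnx_lower[OF assms(2) z] assms by (intro mult_left_mono) auto
  have "z * ln z = t * (a * ln z + a - z) + (1 - t) * (b * ln z + b - z)"
    unfolding z_def by (simp add: algebra_simps)
  then show ?thesis using 1 2 unfolding eta_def z_def[symmetric] by simp
qed

lemma mul_ln_mono:
  fixes u z :: real assumes "0 \<le> u" "u \<le> z"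
  shows "u * ln u \<le> u * ln z"
proof (cases "u = 0")
  case False
  then show ?thesis using assms by (intro mult_left_mono) auto
qed simp

lemma eta_defect:
  fixes a b t :: real
  assumes "0 \<le> a" "0 \<le> b" "0 \<le> t" "t \<le> 1"
  shows "eta (t * a + (1 - t) * b) \<le> t * eta a + (1 - t) * eta b - a * (t * ln t) - b * ((1 - t) * ln (1 - t))"
proof -
  define z where "z = t * a + (1 - t) * b"
  have ta: "0 \<le> t * a" "t * a \<le> z" and tb: "0 \<le> (1 - t) * b" "(1 - t) * b \<le> z"
    using assms unfolding z_def by auto
  have e1: "(t * a) * ln (t * a) = t * (a * ln a) + a * (t * ln t)"
    using assms by (cases "t = 0 \<or> a = 0") (auto simp: ln_mult algebra_simps)
  have e2: "((1 - t) * b) * ln ((1 - t) * b) = (1 - t) * (b * ln b) + b * ((1 - t) * ln (1 - t))"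
  proof (cases "t = 1 \<or> b = 0")
    case False
    then have "1 - t > 0" "b > 0" using assms by auto
    then have "ln ((1 - t) * b) = ln (1 - t) + ln b" by (simp add: ln_mult)
    then show ?thesis by (simp add: algebra_simps)
  qed auto
  have "z * ln z = (t * a) * ln z + ((1 - t) * b) * ln z" unfolding z_def by (simp add: algebra_simps)
  moreover have "(t * a) * ln (t * a) \<le> (t * a) * ln z" by (rule mul_ln_mono[OF ta])
  moreover have "((1 - t) * b) * ln ((1 - t) * b) \<le> ((1 - t) * b) * ln z" by (rule mul_ln_mono[OF tb])
  ultimately show ?thesis using e1 e2 unfolding eta_def z_def[symmetric] by simp
qed

lemma half_bound:
  fixes t :: real assumes "0 \<le> t"
  shows "- (t * ln t) \<le> t * ln 2 + 1/2 - t"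
proof (cases "t = 0")
  case False
  then have t: "t > 0" using assms by simp
  have "ln (1 / (2 * t)) \<le> 1 / (2 * t) - 1" using ln_le_minus_one[of "1/(2*t)"] t by simp
  then have "t * ln (1 / (2 * t)) \<le> t * (1 / (2 * t) - 1)" using t by (simp add: mult_left_mono)
  then show ?thesis using t by (simp add: ln_div ln_mult algebra_simps)
qed simp

lemma binary_entropy:
  fixes t :: real assumes "0 \<le> t" "t \<le> 1"
  shows "- (t * ln t) - (1 - t) * ln (1 - t) \<le> ln 2"
  using half_bound[of t] half_bound[of "1 - t"] assms by (simp add: algebra_simps)

lemma eta_term_upper:
  fixes q m :: real assumes "0 \<le> q" "0 < m"
  shows "eta q \<le> q * ln m - q + 1 / m"
  using xlnx_lower[OF assms(1), of "1/m"] assms by (simp add: eta_def ln_div)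

lemma kl_nonneg:
  fixes q :: "nat \<Rightarrow> real" and m :: nat
  assumes "m \<ge> 1" "\<And>i. i < m \<Longrightarrow> 0 \<le> q i" "(\<Sum>i<m. q i) = 1"
  shows "(\<Sum>i<m. eta (q i)) \<le> ln m"
proof -
  have "(\<Sum>i<m. eta (q i)) \<le> (\<Sum>i<m. q i * ln m - q i + 1 / m)"
    using assms by (intro sum_mono eta_term_upper) auto
  also have "\<dots> = ln m" using assms by (simp add: sum.distrib sum_subtractf sum_distrib_right[symmetric])
  finally show ?thesis .
qed

lemma eta_term_lower:
  fixes q p :: real and m :: real
  assumes p: "1 < p" "p \<le> 2" and q: "0 \<le> q" and m: "0 < m"
  shows "q * ln m - eta q - q + 1 / m \<le> 4 / (p - 1) * m powr (p - 1) * \<bar>q - 1 / m\<bar> powr p"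
proof -
  define y where "y = m * q"
  have y: "0 \<le> y" using q m by (simp add: y_def)
  have lhs: "m * (q * ln m - eta q - q + 1 / m) = y * ln y - y + 1"
  proof (cases "q = 0")
    case False
    then have "ln y = ln m + ln q" using q m by (simp add: y_def ln_mult)
    then show ?thesis using m by (simp add: y_def eta_def algebra_simps)
  qed (use m in \<open>simp add: y_def eta_def\<close>)
  have rhs: "m * (4 / (p - 1) * m powr (p - 1) * \<bar>q - 1 / m\<bar> powr p) = 4 / (p - 1) * \<bar>y - 1\<bar> powr p"
  proof -
    have "\<bar>y - 1\<bar> = m * \<bar>q - 1 / m\<bar>" 
    proof -
      have "m * q - 1 = m * (q - 1 / m)" using m by (simp add: algebra_simps)
      then show ?thesis using m by (simp add: y_def abs_mult)
    qed
    then have "\<bar>y - 1\<bar> powr p = m powr p * \<bar>q - 1 / m\<bar> powr p" using m by (simp add: powr_mult)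
    moreover have "m * m powr (p - 1) = m powr p" using m powr_mult_base[of m "p - 1"] by simp
    ultimately show ?thesis by (simp add: algebra_simps)
  qed
  have "m * (q * ln m - eta q - q + 1 / m) \<le> m * (4 / (p - 1) * m powr (p - 1) * \<bar>q - 1 / m\<bar> powr p)"
    unfolding lhs rhs using g_bound[OF p y] .
  then show ?thesis using m by (rule mult_left_le_imp_le)
qed

lemma kl_upper:
  fixes q :: "nat \<Rightarrow> real" and m :: nat and p :: real
  assumes p: "1 < p" "p \<le> 2" and "m \<ge> 1" "\<And>i. i < m \<Longrightarrow> 0 \<le> q i" "(\<Sum>i<m. q i) = 1"
  shows "ln m - (\<Sum>i<m. eta (q i)) \<le> 4 / (p - 1) * m powr (p - 1) * (\<Sum>i<m. \<bar>q i - 1 / m\<bar> powr p)"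
proof -
  have "ln m - (\<Sum>i<m. eta (q i)) = (\<Sum>i<m. q i * ln m - eta (q i) - q i + 1 / m)"
    using assms by (simp add: sum.distrib sum_subtractf sum_distrib_right[symmetric])
  also have "\<dots> \<le> (\<Sum>i<m. 4 / (p - 1) * m powr (p - 1) * \<bar>q i - 1 / m\<bar> powr p)"
    using assms by (intro sum_mono eta_term_lower) auto
  also have "\<dots> = 4 / (p - 1) * m powr (p - 1) * (\<Sum>i<m. \<bar>q i - 1 / m\<bar> powr p)"
    by (simp add: sum_distrib_left)
  finally show ?thesis .
qed

definition phi :: "real \<Rightarrow> nat \<Rightarrow> (nat \<Rightarrow> real) \<Rightarrow> real" where
  "phi M m x = (\<Sum>i<m. eta (x i / M)) / ln 2"

definition G :: "real \<Rightarrow> nat \<Rightarrow> (nat \<Rightarrow> real) \<Rightarrow> (nat \<Rightarrow> real)" where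
  "G M m x = (\<lambda>i. if i = m then phi M m x else x i)"

definition Sx :: "real \<Rightarrow> nat \<Rightarrow> (nat \<Rightarrow> real) set" where
  "Sx M m = {x. (\<forall>i<m. 0 \<le> x i) \<and> (\<forall>i. m \<le> i \<longrightarrow> x i = 0) \<and> (\<Sum>i<m. x i) = M}"

lemma Sx_le:
  assumes "x \<in> Sx M m" "i < m" shows "0 \<le> x i" "x i \<le> M"
proof -
  show "0 \<le> x i" using assms by (auto simp: Sx_def)
  have "x i \<le> (\<Sum>j<m. x j)"
    using assms by (intro member_le_sum) (auto simp: Sx_def)
  then show "x i \<le> M" using assms by (simp add: Sx_def)
qed

lemma q_props:
  assumes "x \<in> Sx M m" "M > 0"
  shows "\<And>i. i < m \<Longrightarrow> 0 \<le> x i / M" "(\<Sum>i<m. x i / M) = 1"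
  using assms by (auto simp: Sx_def sum_divide_distrib[symmetric])

lemma eta_nonneg: "0 \<le> u \<Longrightarrow> u \<le> 1 \<Longrightarrow> 0 \<le> eta u"
  unfolding eta_def
  by (cases "u = 0") (auto simp: mult_nonneg_nonpos)

lemma phi_bounds:
  assumes "x \<in> Sx M m" "M > 0" "m \<ge> 1"
  shows "0 \<le> phi M m x" "phi M m x \<le> ln m / ln 2"
proof -
  have "0 \<le> (\<Sum>i<m. eta (x i / M))"
    using Sx_le[OF assms(1)] assms(2) by (intro sum_nonneg eta_nonneg) auto
  then show "0 \<le> phi M m x" by (simp add: phi_def)
  have "(\<Sum>i<m. eta (x i / M)) \<le> ln m"
    using q_props[OF assms(1,2)] assms(3) by (intro kl_nonneg) auto
  then show "phi M m x \<le> ln m / ln 2" by (simp add: phi_def divide_right_mono)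
qed

lemma phi_lower:
  fixes p L M :: real
  assumes p: "1 < p" "p \<le> 2" and m: "m \<ge> 1" and M: "M > 0"
    and key: "4 / (p - 1) * m powr (p - 1) * L powr p \<le> (ln m - L * ln 2) * M powr p"
    and x: "x \<in> Sx M m"
    and D: "(\<Sum>i<m. \<bar>x i - M / m\<bar> powr p) \<le> L powr p"
  shows "L \<le> phi M m x"
proof -
  define C where "C = 4 / (p - 1) * m powr (p - 1)"
  have C: "0 \<le> C" using p by (simp add: C_def)
  have Mp: "M powr p > 0" using M by simp
  have "ln m - (\<Sum>i<m. eta (x i / M)) \<le> C * (\<Sum>i<m. \<bar>x i / M - 1 / m\<bar> powr p)"
    unfolding C_def using q_props[OF x M] m p by (intro kl_upper) auto
  also have "(\<Sum>i<m. \<bar>x i / M - 1 / m\<bar> powr p) = (\<Sum>i<m. \<bar>x i - M / m\<bar> powr p) / M powr p"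
  proof -
    have "\<And>i. \<bar>x i / M - 1 / m\<bar> powr p = \<bar>x i - M / m\<bar> powr p / M powr p"
    proof -
      fix i
      have "x i / M - 1 / m = (x i - M / m) / M" using M by (simp add: field_simps)
      then show "\<bar>x i / M - 1 / m\<bar> powr p = \<bar>x i - M / m\<bar> powr p / M powr p"
        using M by (simp add: powr_divide)
    qed
    then show ?thesis by (simp add: sum_divide_distrib)
  qed
  finally have "(ln m - (\<Sum>i<m. eta (x i / M))) * M powr p \<le> C * (\<Sum>i<m. \<bar>x i - M / m\<bar> powr p)"
    using Mp by (simp add: field_simps)
  also have "\<dots> \<le> C * L powr p" using D C by (rule mult_left_mono)
  also have "\<dots> \<le> (ln m - L * ln 2) * M powr p" using key by (simp add: C_def)
  finally have "ln m - (\<Sum>i<m. eta (x i / M)) \<le> ln m - L * ln 2"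
    using Mp by simp
  then have "L * ln 2 \<le> (\<Sum>i<m. eta (x i / M))" by simp
  then show ?thesis by (simp add: phi_def field_simps)
qed

lemma comb_in_Sx:
  assumes "x \<in> Sx M m" "y \<in> Sx M m" "0 \<le> t" "t \<le> 1"
  shows "(\<lambda>i. t * x i + (1 - t) * y i) \<in> Sx M m"
proof -
  have "(\<Sum>i<m. t * x i + (1 - t) * y i) = t * (\<Sum>i<m. x i) + (1 - t) * (\<Sum>i<m. y i)"
    by (simp add: sum.distrib sum_distrib_left)
  also have "\<dots> = M" using assms by (simp add: Sx_def algebra_simps)
  finally show ?thesis using assms by (auto simp: Sx_def)
qed

lemma phi_comb:
  assumes x: "x \<in> Sx M m" and y: "y \<in> Sx M m" and t: "0 \<le> t" "t \<le> 1" and M: "M > 0"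
  shows "\<bar>phi M m (\<lambda>i. t * x i + (1 - t) * y i) - (t * phi M m x + (1 - t) * phi M m y)\<bar> \<le> 1"
proof -
  define a where "a = (\<lambda>i. x i / M)"
  define b where "b = (\<lambda>i. y i / M)"
  have a: "\<And>i. i < m \<Longrightarrow> 0 \<le> a i" "(\<Sum>i<m. a i) = 1" using q_props[OF x M] by (auto simp: a_def)
  have b: "\<And>i. i < m \<Longrightarrow> 0 \<le> b i" "(\<Sum>i<m. b i) = 1" using q_props[OF y M] by (auto simp: b_def)
  have zi: "\<And>i. (t * x i + (1 - t) * y i) / M = t * a i + (1 - t) * b i"
    using M by (simp add: a_def b_def field_simps)
  define Z where "Z = (\<Sum>i<m. eta (t * a i + (1 - t) * b i))"
  define X where "X = (\<Sum>i<m. eta (a i))"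
  define Y where "Y = (\<Sum>i<m. eta (b i))"
  have lo: "t * X + (1 - t) * Y \<le> Z"
  proof -
    have "t * X + (1 - t) * Y = (\<Sum>i<m. t * eta (a i) + (1 - t) * eta (b i))"
      by (simp add: X_def Y_def sum.distrib sum_distrib_left)
    also have "\<dots> \<le> Z" unfolding Z_def using a b t by (intro sum_mono eta_concave) auto
    finally show ?thesis .
  qed
  have hi: "Z \<le> t * X + (1 - t) * Y + ln 2"
  proof -
    have "Z \<le> (\<Sum>i<m. t * eta (a i) + (1 - t) * eta (b i) - a i * (t * ln t) - b i * ((1 - t) * ln (1 - t)))"
      unfolding Z_def using a b t by (intro sum_mono eta_defect) auto
    also have "\<dots> = t * X + (1 - t) * Y - (\<Sum>i<m. a i) * (t * ln t) - (\<Sum>i<m. b i) * ((1 - t) * ln (1 - t))"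
      by (simp add: X_def Y_def sum.distrib sum_subtractf sum_distrib_left sum_distrib_right)
    also have "\<dots> = t * X + (1 - t) * Y + (- (t * ln t) - (1 - t) * ln (1 - t))"
      using a b by simp
    also have "\<dots> \<le> t * X + (1 - t) * Y + ln 2" using binary_entropy[OF t] by simp
    finally show ?thesis .
  qed
  have "phi M m (\<lambda>i. t * x i + (1 - t) * y i) - (t * phi M m x + (1 - t) * phi M m y) = (Z - (t * X + (1 - t) * Y)) / ln 2"
    unfolding phi_def Z_def X_def Y_def zi by (simp add: a_def b_def field_simps)
  moreover have "\<bar>Z - (t * X + (1 - t) * Y)\<bar> \<le> ln 2" using lo hi by simp
  ultimately show ?thesis by (simp add: abs_div)
qed

lemma rootp_lower:
  fixes p a s :: real assumes "1 < p" "0 \<le> a" "a powr p \<le> s"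
  shows "a \<le> s powr (1 / p)"
proof -
  have "a = (a powr p) powr (1 / p)" using assms by (simp add: powr_powr)
  also have "\<dots> \<le> s powr (1 / p)" using assms by (intro powr_mono2) auto
  finally show ?thesis .
qed

lemma rootp_upper:
  fixes p b s :: real assumes "1 < p" "0 \<le> s" "0 \<le> b" "s \<le> b powr p"
  shows "s powr (1 / p) \<le> b"
proof -
  have "s powr (1 / p) \<le> (b powr p) powr (1 / p)" using assms by (intro powr_mono2) auto
  also have "\<dots> = b" using assms by (simp add: powr_powr)
  finally show ?thesis .
qed

lemma lp_dist_nonneg: "0 \<le> lp_dist p n x y"
  by (simp add: lp_dist_def lp_norm_def)

lemma setdist_le:
  assumes "a \<in> A" shows "lp_setdist p n x A \<le> lp_dist p n x a"
  unfolding lp_setdist_def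
  by (rule cInf_lower) (use assms lp_dist_nonneg in \<open>auto intro: bdd_belowI[of _ 0]\<close>)

lemma setdist_ge:
  assumes "A \<noteq> {}" "\<And>a. a \<in> A \<Longrightarrow> L \<le> lp_dist p n x a" shows "L \<le> lp_setdist p n x A"
  unfolding lp_setdist_def
  by (rule cInf_greatest) (use assms in auto)

lemma vert_in: assumes "j < m" "0 \<le> M" shows "(\<lambda>i. if i = j then M else 0) \<in> Sx M m"
  using assms by (auto simp: Sx_def)

lemma phi_vert: assumes "j < m" "M > 0" shows "phi M m (\<lambda>i. if i = j then M else 0) = 0"
proof -
  have "(\<Sum>i<m. eta ((if i = j then M else 0) / M)) = (\<Sum>i<m. 0)"
    using assms by (intro sum.cong) (auto simp: eta_def)
  then show ?thesis by (simp add: phi_def)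
qed

lemma G_vert: assumes "j < m" "M > 0" shows "G M m (\<lambda>i. if i = j then M else 0) = (\<lambda>i. if i = j then M else 0)"
  using assms phi_vert[OF assms] by (auto simp: G_def)

lemma construction:
  fixes p L M :: real and m :: nat
  assumes p: "1 < p" "p \<le> 2" and m: "m \<ge> 1" and M: "M > 0" and L: "0 \<le> L"
    and key: "4 / (p - 1) * m powr (p - 1) * L powr p \<le> (ln m - L * ln 2) * M powr p"
    and Mlog: "ln m / ln 2 \<le> M"
  shows "\<exists>A. A \<noteq> {} \<and> A \<subseteq> lp_space (Suc m) \<and> approx_convex p (Suc m) A \<and>
           lp_hausdorff p (Suc m) A (conv_hull A) \<ge> ereal L \<and>
           lp_diam p (Suc m) A \<le> ereal (3 * M)"
proof (intro exI conjI)
  define A where "A = G M m ` Sx M m"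
  show ne: "A \<noteq> {}" unfolding A_def using vert_in[of 0 m M] m M by auto
  show "A \<subseteq> lp_space (Suc m)"
    unfolding A_def lp_space_def G_def Sx_def by auto
  show "approx_convex p (Suc m) A"
    unfolding approx_convex_def
  proof (intro ballI)
    fix a b t assume "a \<in> A" "b \<in> A" and t: "t \<in> {0..1::real}"
    then obtain x y where x: "x \<in> Sx M m" and y: "y \<in> Sx M m" and ab: "a = G M m x" "b = G M m y"
      by (auto simp: A_def)
    define z where "z = (\<lambda>i. t * x i + (1 - t) * y i)"
    have z: "z \<in> Sx M m" unfolding z_def using comb_in_Sx[OF x y] t by auto
    define w where "w = (\<lambda>i. t * a i + (1 - t) * b i)"
    define \<delta> where "\<delta> = t * phi M m x + (1 - t) * phi M m y - phi M m z"
    have d1: "\<bar>\<delta>\<bar> \<le> 1" using phi_comb[OF x y _ _ M, of t] t by (auto simp: \<delta>_def z_def)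
    have "(\<Sum>i<Suc m. \<bar>w i - G M m z i\<bar> powr p) = (\<Sum>i<m. \<bar>w i - G M m z i\<bar> powr p) + \<bar>\<delta>\<bar> powr p"
      by (simp add: w_def ab G_def \<delta>_def)
    also have "(\<Sum>i<m. \<bar>w i - G M m z i\<bar> powr p) = 0"
      by (intro sum.neutral) (simp add: w_def ab G_def z_def)
    finally have "lp_dist p (Suc m) w (G M m z) = (\<bar>\<delta>\<bar> powr p) powr (1 / p)"
      by (simp add: lp_dist_def lp_norm_def)
    also have "\<dots> = \<bar>\<delta>\<bar>" using p by (simp add: powr_powr)
    finally have "lp_dist p (Suc m) w (G M m z) \<le> 1" using d1 by simp
    moreover have "G M m z \<in> A" using z by (simp add: A_def)
    ultimately show "lp_setdist p (Suc m) (\<lambda>i. t * a i + (1 - t) * b i) A \<le> 1"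
      using setdist_le[of "G M m z" A p "Suc m" w] by (simp add: w_def)
  qed
  show "ereal L \<le> lp_hausdorff p (Suc m) A (conv_hull A)"
  proof -
    define P where "P = (\<lambda>i. if i < m then M / m else 0::real)"
    have Pin: "P \<in> conv_hull A"
      unfolding conv_hull_def
    proof (intro CollectI exI conjI allI impI)
      fix j assume j: "j < m"
      show "0 \<le> 1 / real m" by simp
      show "(\<lambda>i. if i = j then M else 0) \<in> A"
        using G_vert[OF j M] vert_in[OF j less_imp_le[OF M]] unfolding A_def by (metis image_eqI)
    next
      show "(\<Sum>j<m. 1 / real m) = 1" using m by simp
    next
      show "P = (\<lambda>i. \<Sum>j<m. 1 / real m * (if i = j then M else 0))"
      proof
        fix i
        show "P i = (\<Sum>j<m. 1 / real m * (if i = j then M else 0))"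
          by (simp add: P_def if_distrib sum.delta cong: if_cong)
      qed
    qed
    have "L \<le> lp_setdist p (Suc m) P A"
    proof (rule setdist_ge[OF ne])
      fix a assume "a \<in> A"
      then obtain x where x: "x \<in> Sx M m" and a: "a = G M m x" by (auto simp: A_def)
      define D where "D = (\<Sum>i<m. \<bar>x i - M / m\<bar> powr p)"
      have D0: "0 \<le> D" by (simp add: D_def sum_nonneg)
      have "(\<Sum>i<Suc m. \<bar>P i - a i\<bar> powr p) = (\<Sum>i<m. \<bar>P i - a i\<bar> powr p) + \<bar>phi M m x\<bar> powr p"
        by (simp add: P_def a G_def)
      also have "(\<Sum>i<m. \<bar>P i - a i\<bar> powr p) = D"
        unfolding D_def by (intro sum.cong) (auto simp: P_def a G_def abs_minus_commute)
      finally have S: "(\<Sum>i<Suc m. \<bar>P i - a i\<bar> powr p) = D + \<bar>phi M m x\<bar> powr p" .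
      have "L powr p \<le> D + \<bar>phi M m x\<bar> powr p"
      proof (cases "D \<le> L powr p")
        case True
        then have "L \<le> phi M m x" using phi_lower[OF p m M key x] by (simp add: D_def)
        then have "L powr p \<le> \<bar>phi M m x\<bar> powr p" using L p by (intro powr_mono2) auto
        then show ?thesis using D0 by simp
      next
        case False
        have "0 \<le> \<bar>phi M m x\<bar> powr p" by simp
        then show ?thesis using False by linarith
      qed
      then show "L \<le> lp_dist p (Suc m) P a"
        unfolding lp_dist_def lp_norm_def using S rootp_lower[OF p(1) L] by simp
    qed
    also have "ereal (lp_setdist p (Suc m) P A) \<le> (SUP b\<in>conv_hull A. ereal (lp_setdist p (Suc m) b A))"
      using Pin by (rule SUP_upper)
    also have "\<dots> \<le> lp_hausdorff p (Suc m) A (conv_hull A)"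
      unfolding lp_hausdorff_def by simp
    finally show ?thesis by simp
  qed
  show "lp_diam p (Suc m) A \<le> ereal (3 * M)"
    unfolding lp_diam_def
  proof (intro SUP_least)
    fix a b assume "a \<in> A" "b \<in> A"
    then obtain x y where x: "x \<in> Sx M m" and y: "y \<in> Sx M m" and ab: "a = G M m x" "b = G M m y"
      by (auto simp: A_def)
    have S: "(\<Sum>i<Suc m. \<bar>a i - b i\<bar> powr p) = (\<Sum>i<m. \<bar>x i - y i\<bar> powr p) + \<bar>phi M m x - phi M m y\<bar> powr p"
    proof -
      have "(\<Sum>i<m. \<bar>a i - b i\<bar> powr p) = (\<Sum>i<m. \<bar>x i - y i\<bar> powr p)"
        by (intro sum.cong) (auto simp: ab G_def)
      then show ?thesis by (simp add: ab G_def)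
    qed
    have t1: "(\<Sum>i<m. \<bar>x i - y i\<bar> powr p) \<le> 2 * M powr p"
    proof -
      have "(\<Sum>i<m. \<bar>x i - y i\<bar> powr p) \<le> (\<Sum>i<m. (x i + y i) * M powr (p - 1))"
      proof (intro sum_mono)
        fix i assume i: "i \<in> {..<m}"
        have bx: "0 \<le> x i" "x i \<le> M" "0 \<le> y i" "y i \<le> M" using Sx_le[OF x] Sx_le[OF y] i by auto
        have "\<bar>x i - y i\<bar> powr p = \<bar>x i - y i\<bar> powr 1 * \<bar>x i - y i\<bar> powr (p - 1)"
          using powr_add[of "\<bar>x i - y i\<bar>" 1 "p - 1"] by simp
        also have "\<dots> \<le> (x i + y i) * M powr (p - 1)"
          using bx p by (intro mult_mono powr_mono2) auto
        finally show "\<bar>x i - y i\<bar> powr p \<le> (x i + y i) * M powr (p - 1)" .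
      qed
      also have "\<dots> = 2 * M * M powr (p - 1)"
        using x y by (simp add: Sx_def sum.distrib sum_distrib_right[symmetric])
      also have "\<dots> = 2 * M powr p" using powr_mult_base[of M "p - 1"] M by simp
      finally show ?thesis .
    qed
    have t2: "\<bar>phi M m x - phi M m y\<bar> powr p \<le> M powr p"
      using phi_bounds[OF x M m] phi_bounds[OF y M m] Mlog p by (intro powr_mono2) auto
    have "(3 * M) powr p \<ge> 3 * M powr p"
    proof -
      have "3 powr 1 \<le> 3 powr p" using p by (intro powr_mono) auto
      then show ?thesis using M by (simp add: powr_mult)
    qed
    then have "(\<Sum>i<Suc m. \<bar>a i - b i\<bar> powr p) \<le> (3 * M) powr p" using S t1 t2 by simp
    then have "lp_dist p (Suc m) a b \<le> 3 * M"
      unfolding lp_dist_def lp_norm_def using M p by (intro rootp_upper) (auto intro!: sum_nonneg simp del: sum.lessThan_Suc)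
    then show "ereal (lp_dist p (Suc m) a b) \<le> ereal (3 * M)" by simp
  qed
qed

theorem corollary4p2:
  fixes p \<epsilon> :: real
  assumes "1 < p" "p \<le> 2" "0 < \<epsilon>" "\<epsilon> < 3"
  shows "\<exists>N::nat. \<forall>n\<ge>N. \<exists>A. A \<noteq> {} \<and> A \<subseteq> lp_space n \<and> approx_convex p n A \<and>
           lp_hausdorff p n A (conv_hull A) \<ge> ereal (log 2 (real n) - \<epsilon>) \<and>
           lp_diam p n A \<le> ereal (25 / \<epsilon> * real n powr ((p - 1) / p) * (log 2 (real n))\<^sup>2)"
proof -
  note p = assms(1,2) and e = assms(3,4)
  define C where "C = 4 / (p - 1)"
  define K where "K = max 1 (2 * C / (\<epsilon> * ln 2))"
  have K1: "1 \<le> K" by (simp add: K_def)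
  have KC: "C \<le> \<epsilon> * ln 2 / 2 * K"
  proof -
    have "2 * C / (\<epsilon> * ln 2) \<le> K" by (simp add: K_def)
    then show ?thesis using e by (simp add: field_simps)
  qed
  define N where "N = nat \<lceil>max (max 8 (1 + 2 / (\<epsilon> * ln 2))) (2 powr (3 * K * \<epsilon> / 25))\<rceil>"
  show ?thesis
  proof (rule exI[of _ N], intro allI impI)
    fix n assume nN: "N \<le> n"
    have nge: "max (max 8 (1 + 2 / (\<epsilon> * ln 2))) (2 powr (3 * K * \<epsilon> / 25)) \<le> real n"
      using nN unfolding N_def by linarith
    then have n8: "8 \<le> real n" and n2: "1 + 2 / (\<epsilon> * ln 2) \<le> real n"
      and n3: "2 powr (3 * K * \<epsilon> / 25) \<le> real n" by auto
    obtain m where nm: "n = Suc m" using n8 by (cases n) auto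
    have m1: "m \<ge> 1" using n8 nm by simp
    have mpos: "real m > 0" using m1 by simp
    have mn: "real n = real m + 1" using nm by simp
    define L where "L = log 2 (real n) - \<epsilon>"
    define M where "M = K * real n powr ((p - 1) / p) * log 2 (real n)"
    have lg3: "3 \<le> log 2 (real n)"
    proof -
      have "log 2 8 \<le> log 2 (real n)" using n8 by simp
      moreover have "log 2 (8::real) = 3"
        using log_powr_cancel[of 2 3] by (simp add: powr_numeral)
      ultimately show ?thesis by simp
    qed
    have L0: "0 \<le> L" using lg3 e by (simp add: L_def)
    have npos: "real n powr ((p - 1) / p) \<ge> 1" using n8 p by (intro ge_one_powr_ge_zero) auto
    have M0: "M > 0" unfolding M_def using K1 npos lg3 m1 by (intro mult_pos_pos) (auto simp: nm)
    have Mlog: "ln m / ln 2 \<le> M"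
    proof -
      have "ln m / ln 2 = log 2 m" by (simp add: log_def)
      also have "\<dots> \<le> log 2 n" using mn mpos by simp
      also have "\<dots> \<le> (K * real n powr ((p - 1) / p)) * log 2 n"
      proof -
        have "1 * 1 \<le> K * real n powr ((p - 1) / p)" using K1 npos by (intro mult_mono) auto
        then show ?thesis using lg3 mult_right_mono[of 1 "K * real n powr ((p - 1) / p)" "log 2 n"] by simp
      qed
      finally show ?thesis by (simp add: M_def)
    qed
    have gap: "\<epsilon> * ln 2 / 2 \<le> ln m - L * ln 2"
    proof -
      have "L * ln 2 = ln n - \<epsilon> * ln 2" by (simp add: L_def log_def algebra_simps)
      moreover have "ln n - ln m \<le> 1 / m"
      proof -
        have "ln (real n / m) \<le> real n / m - 1" using ln_le_minus_one[of "real n / m"] mpos mn by simp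
        also have "\<dots> = 1 / m" using mpos mn by (simp add: field_simps)
        finally show ?thesis using mpos mn by (simp add: ln_div)
      qed
      moreover have "1 / real m \<le> \<epsilon> * ln 2 / 2"
      proof -
        have "2 / (\<epsilon> * ln 2) \<le> m" using n2 mn by simp
        then show ?thesis using e mpos by (simp add: field_simps)
      qed
      ultimately show ?thesis by simp
    qed
    have Mp: "M powr p = K powr p * real n powr (p - 1) * log 2 n powr p"
      unfolding M_def using p lg3 K1 by (simp add: powr_mult powr_powr)
    have key: "4 / (p - 1) * m powr (p - 1) * L powr p \<le> (ln m - L * ln 2) * M powr p"
    proof -
      have a: "K \<le> K powr p" using K1 p powr_mono[of 1 p K] by simp
      have b: "real m powr (p - 1) \<le> real n powr (p - 1)" using mn p by (intro powr_mono2) auto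
      have c: "L powr p \<le> log 2 n powr p" using L0 p e by (intro powr_mono2) (auto simp: L_def)
      have "C * m powr (p - 1) * L powr p \<le> (\<epsilon> * ln 2 / 2 * K) * (m powr (p - 1) * L powr p)"
        using mult_right_mono[OF KC, of "m powr (p - 1) * L powr p"] by (simp add: mult.assoc)
      also have "\<dots> = (\<epsilon> * ln 2 / 2) * (K * (m powr (p - 1) * L powr p))" by (simp add: mult.assoc)
      also have "\<dots> \<le> (\<epsilon> * ln 2 / 2) * (K powr p * (real n powr (p - 1) * log 2 n powr p))"
      proof -
        have bc: "m powr (p - 1) * L powr p \<le> real n powr (p - 1) * log 2 n powr p"
          using b c by (intro mult_mono) auto
        have "K * (m powr (p - 1) * L powr p) \<le> K powr p * (real n powr (p - 1) * log 2 n powr p)"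
          using mult_mono[OF a bc] by simp
        then show ?thesis using e by (intro mult_left_mono) auto
      qed
      also have "\<dots> \<le> (ln m - L * ln 2) * (K powr p * (real n powr (p - 1) * log 2 n powr p))"
        using gap by (intro mult_right_mono) auto
      finally show ?thesis using Mp by (simp add: C_def mult.assoc)
    qed
    have diam: "3 * M \<le> 25 / \<epsilon> * real n powr ((p - 1) / p) * (log 2 (real n))\<^sup>2"
    proof -
      have "3 * K * \<epsilon> / 25 \<le> log 2 n"
      proof -
        have "log 2 (2 powr (3 * K * \<epsilon> / 25)) \<le> log 2 n"
          using n3 m1 nm log_le_cancel_iff[of 2 "2 powr (3 * K * \<epsilon> / 25)" n] by simp
        then show ?thesis using log_powr_cancel[of 2 "3 * K * \<epsilon> / 25"] by simp
      qed
      then have "3 * K \<le> 25 / \<epsilon> * log 2 n" using e by (simp add: field_simps)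
      then have "3 * K * (real n powr ((p - 1) / p) * log 2 n) \<le> 25 / \<epsilon> * log 2 n * (real n powr ((p - 1) / p) * log 2 n)"
        using npos lg3 by (intro mult_right_mono) auto
      then show ?thesis by (simp add: M_def power2_eq_square algebra_simps)
    qed
    obtain A where A: "A \<noteq> {}" "A \<subseteq> lp_space (Suc m)" "approx_convex p (Suc m) A"
      "lp_hausdorff p (Suc m) A (conv_hull A) \<ge> ereal L" "lp_diam p (Suc m) A \<le> ereal (3 * M)"
      using construction[OF p m1 M0 L0 key Mlog] by blast
    show "\<exists>A. A \<noteq> {} \<and> A \<subseteq> lp_space n \<and> approx_convex p n A \<and>
           lp_hausdorff p n A (conv_hull A) \<ge> ereal (log 2 (real n) - \<epsilon>) \<and>
           lp_diam p n A \<le> ereal (25 / \<epsilon> * real n powr ((p - 1) / p) * (log 2 (real n))\<^sup>2)"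
    proof (intro exI[of _ A] conjI)
      show "A \<noteq> {}" by (rule A(1))
      show "A \<subseteq> lp_space n" using A(2) nm by simp
      show "approx_convex p n A" using A(3) nm by simp
      show "lp_hausdorff p n A (conv_hull A) \<ge> ereal (log 2 (real n) - \<epsilon>)" using A(4) nm by (simp add: L_def)
      have "lp_diam p n A \<le> ereal (3 * M)" using A(5) nm by simp
      also have "\<dots> \<le> ereal (25 / \<epsilon> * real n powr ((p - 1) / p) * (log 2 (real n))\<^sup>2)"
        using diam by simp
      finally show "lp_diam p n A \<le> ereal (25 / \<epsilon> * real n powr ((p - 1) / p) * (log 2 (real n))\<^sup>2)" .
    qed
  qed
qed

end
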